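(* In the setting of the context, there exist constants $C>0$ and $M_0>\rho$ such that for all $M\geq M_0$, $$|\mathcal N(\eta)|\geq Ce^{kM},\qquad \mathcal N(\eta):=\partial_w\Theta^+(\eta)\partial_z\Theta^-(\eta)-\partial_z\Theta^+(\eta)\partial_w\Theta^-(\eta).$$
   Context: Let $V\in C^\infty(\mathbb R)$ be real-valued with $V=V_{\rm per}+V_{\rm def}$, where $V_{\rm per}$ is $1$-periodic and $V_{\rm def}(x)=0$ for $|x|>\rho$, some $\rho\geq0$. Suppose $(-\frac{d^2}{dx^2}+V)\Phi=E\Phi$ with $E>0$, $0\neq\Phi\in L^2(\mathbb R)$. For $\zeta=(w,z)\in\mathbb C^2$ let $u_\zeta,v_\zeta$ solve $-y''+(V-z)y=0$ on $\mathbb R$ with: if $\Phi(0)\neq0$ (normalized $\Phi(0)=1$), $u_\zeta(0)=1,u_\zeta'(0)=w,v_\zeta(0)=-w/(1+w^2),v_\zeta'(0)=1/(1+w^2)$, $\eta=(\Phi'(0),E)$; if $\Phi(0)=0$ (normalized $\Phi'(0)=1$), $u_\zeta(0)=-w,u_\zeta'(0)=1,v_\zeta(0)=-1/(1+w^2),v_\zeta'(0)=-w/(1+w^2)$, $\eta=(0,E)$. So $u_\eta=\Phi$. Fix $C_0,k>0$ with $|u_\eta|,|u_\eta'|\leq C_0e^{-k|x|}$ and $|v_\eta|,|v_\eta'|\leq C_0e^{k|x|}$ on $\mathbb R$. For $M>\rho$: $\Theta^\pm(\zeta):=u_\zeta'(\pm M)-i\sqrt z\,u_\zeta(\pm M)$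 (principal branch of the square root). *)

theory Defs
  imports "HOL-Analysis.Analysis"
begin

definition smooth_real :: "(real \<Rightarrow> real) \<Rightarrow> bool" where
  "smooth_real f \<longleftrightarrow> (\<exists>D :: nat \<Rightarrow> real \<Rightarrow> real. D 0 = f \<and>
      (\<forall>n x. (D n has_real_derivative D (Suc n) x) (at x)))"

definition schr_sol :: "(real \<Rightarrow> real) \<Rightarrow> complex \<Rightarrow> (real \<Rightarrow> complex) \<Rightarrow> (real \<Rightarrow> complex) \<Rightarrow> bool" where
  "schr_sol V z y y' \<longleftrightarrow> (\<forall>x. (y has_vector_derivative y' x) (at x) \<and>
      (y' has_vector_derivative ((complex_of_real (V x) - z) * y x)) (at x))"

text \<open>Theta^{+-}(w,z) = u_zeta'(+-M) - i sqrt z u_zeta(+-M), principal square root.\<close>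
definition Theta :: "(complex \<Rightarrow> complex \<Rightarrow> real \<Rightarrow> complex) \<Rightarrow> (complex \<Rightarrow> complex \<Rightarrow> real \<Rightarrow> complex)
    \<Rightarrow> real \<Rightarrow> complex \<Rightarrow> complex \<Rightarrow> complex" where
  "Theta u u' x w z = u' w z x - \<i> * csqrt z * u w z x"

definition Ncal :: "(complex \<Rightarrow> complex \<Rightarrow> complex) \<Rightarrow> (complex \<Rightarrow> complex \<Rightarrow> complex)
    \<Rightarrow> complex \<Rightarrow> complex \<Rightarrow> complex" where
  "Ncal Tp Tm w0 z0 =
     deriv (\<lambda>w. Tp w z0) w0 * deriv (\<lambda>z. Tm w0 z) z0
   - deriv (\<lambda>z. Tp w0 z) z0 * deriv (\<lambda>w. Tm w z0) w0"

end

theory Submission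
  imports Defs
begin


lemma re_im_cs: "\<bar>Re a * Re b + Im a * Im b\<bar> \<le> cmod a * cmod b"
proof -
  have "Re (cnj a * b) = Re a * Re b + Im a * Im b" by simp
  moreover have "\<bar>Re (cnj a * b)\<bar> \<le> cmod (cnj a * b)" by (rule abs_Re_le_cmod)
  ultimately show ?thesis by (simp add: norm_mult)
qed

lemma gron_aux:
  fixes y p :: "real \<Rightarrow> complex" and f f' :: "real \<Rightarrow> real"
  assumes dy: "\<And>t. \<bar>t\<bar> \<le> X \<Longrightarrow> (y has_vector_derivative p t) (at t)"
    and dp: "\<And>t. \<bar>t\<bar> \<le> X \<Longrightarrow> (p has_vector_derivative (q t * y t + g t)) (at t)"
    and q: "\<And>t. \<bar>t\<bar> \<le> X \<Longrightarrow> norm (q t) \<le> L"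
    and g: "\<And>t. \<bar>t\<bar> \<le> X \<Longrightarrow> norm (g t) \<le> G"
    and L: "0 \<le> L"
    and f_def: "f = (\<lambda>t. norm (y t)^2 + norm (p t)^2)"
  shows "\<And>t. \<bar>t\<bar> \<le> X \<Longrightarrow> \<exists>d. (f has_real_derivative d) (at t) \<and> \<bar>d\<bar> \<le> (L+2) * f t + G^2"
proof -
  fix t assume t: "\<bar>t\<bar> \<le> X"
  define P where "P = q t * y t + g t"
  have f_eq: "f = (\<lambda>t. (Re (y t))^2 + (Im (y t))^2 + (Re (p t))^2 + (Im (p t))^2)"
    unfolding f_def by (simp add: cmod_power2 add.assoc)
  define d where "d = 2 * (Re (y t) * Re (p t) + Im (y t) * Im (p t)) + 2 * (Re (p t) * Re P + Im (p t) * Im P)"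
  have "(f has_real_derivative d) (at t)"
    unfolding f_eq d_def
    using dy[OF t] dp[OF t] unfolding P_def
    by (auto intro!: derivative_eq_intros simp: algebra_simps)
  moreover have "\<bar>d\<bar> \<le> (L+2) * f t + G^2"
  proof -
    have a: "\<bar>Re (y t) * Re (p t) + Im (y t) * Im (p t)\<bar> \<le> norm (y t) * norm (p t)" by (rule re_im_cs)
    have b: "\<bar>Re (p t) * Re P + Im (p t) * Im P\<bar> \<le> norm (p t) * norm P" by (rule re_im_cs)
    have c: "norm P \<le> L * norm (y t) + G"
    proof -
      have "norm P \<le> norm (q t) * norm (y t) + norm (g t)" unfolding P_def
        by (metis norm_mult norm_triangle_ineq)
      also have "\<dots> \<le> L * norm (y t) + G"
        using q[OF t] g[OF t] by (intro add_mono mult_right_mono) auto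
      finally show ?thesis .
    qed
    define A where "A = norm (y t)" define B where "B = norm (p t)" define C where "C = norm P"
    have A0: "A \<ge> 0" "B \<ge> 0" "C \<ge> 0" unfolding A_def B_def C_def by auto
    have G0: "G \<ge> 0" using g[OF t] norm_ge_zero order_trans by blast
    define X1 where "X1 = Re (y t) * Re (p t) + Im (y t) * Im (p t)"
    define X2 where "X2 = Re (p t) * Re P + Im (p t) * Im P"
    have dX: "d = 2 * X1 + 2 * X2" unfolding d_def X1_def X2_def by simp
    have "\<bar>d\<bar> \<le> 2 * (A * B) + 2 * (B * C)" unfolding dX using a b unfolding X1_def[symmetric] X2_def[symmetric] A_def B_def C_def by linarith
    also have "\<dots> \<le> 2 * (A*B) + 2 * (B * (L * A + G))"
      using c A0 unfolding A_def B_def C_def by (intro add_mono mult_left_mono) auto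
    also have "\<dots> \<le> (L+2) * (A^2 + B^2) + G^2"
    proof -
      have "2*(A*B) \<le> A^2+B^2" using sum_squares_bound[of A B] by (simp add: mult.assoc)
      moreover have "2*(B*(L*A)) \<le> L*(A^2+B^2)"
      proof -
        have "2*(A*B) \<le> A^2+B^2" using sum_squares_bound[of A B] by (simp add: mult.assoc)
        then have "L*(2*(A*B)) \<le> L*(A^2+B^2)" using L by (rule mult_left_mono)
        then show ?thesis by (simp add: algebra_simps)
      qed
      moreover have "2*(B*G) \<le> B^2+G^2" using sum_squares_bound[of B G] by (simp add: mult.assoc)
      moreover have "0 \<le> A^2" by simp
      moreover have "2 * (A*B) + 2 * (B * (L * A + G)) = 2*(A*B) + 2*(B*(L*A)) + 2*(B*G)" by (simp add: algebra_simps)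
      moreover have "(L+2) * (A^2 + B^2) + G^2 = L*(A^2+B^2) + 2*A^2 + 2*B^2 + G^2" by (simp add: algebra_simps)
      ultimately show ?thesis by linarith
    qed
    also have "\<dots> = (L+2) * f t + G^2" unfolding f_def A_def B_def by simp
    finally show ?thesis .
  qed
  ultimately show "\<exists>d. (f has_real_derivative d) (at t) \<and> \<bar>d\<bar> \<le> (L+2) * f t + G^2" by blast
qed

lemma gronwall_est:
  fixes y p :: "real \<Rightarrow> complex"
  assumes dy: "\<And>t. \<bar>t\<bar> \<le> X \<Longrightarrow> (y has_vector_derivative p t) (at t)"
    and dp: "\<And>t. \<bar>t\<bar> \<le> X \<Longrightarrow> (p has_vector_derivative (q t * y t + g t)) (at t)"
    and q: "\<And>t. \<bar>t\<bar> \<le> X \<Longrightarrow> norm (q t) \<le> L"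
    and g: "\<And>t. \<bar>t\<bar> \<le> X \<Longrightarrow> norm (g t) \<le> G"
    and L: "0 \<le> L" and y0: "y 0 = 0" and p0: "p 0 = 0" and x: "\<bar>x\<bar> \<le> X"
  shows "norm (y x)^2 + norm (p x)^2 \<le> G^2 * \<bar>x\<bar> * exp ((L+2) * \<bar>x\<bar>)"
proof -
  define f where "f = (\<lambda>t. norm (y t)^2 + norm (p t)^2)"
  define c where "c = L + 2"
  have c0: "c > 0" using L unfolding c_def by simp
  have fd: "\<And>t. \<bar>t\<bar> \<le> X \<Longrightarrow> \<exists>d. (f has_real_derivative d) (at t) \<and> \<bar>d\<bar> \<le> c * f t + G^2"
    using gron_aux[OF dy dp q g L f_def] unfolding c_def by blast
  have f0: "f 0 = 0" unfolding f_def using y0 p0 by simp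
  have "f x \<le> G^2 * \<bar>x\<bar> * exp (c * \<bar>x\<bar>)"
  proof (cases "x \<ge> 0")
    case True
    define h where "h = (\<lambda>t. f t * exp (- c * t) - G^2 * t)"
    have "h x \<le> h 0"
    proof (rule DERIV_nonpos_imp_nonincreasing[OF True])
      fix t assume t: "0 \<le> t" "t \<le> x"
      then have "\<bar>t\<bar> \<le> X" using x by simp
      then obtain d where d: "(f has_real_derivative d) (at t)" "\<bar>d\<bar> \<le> c * f t + G^2" using fd by blast
      have "(h has_real_derivative (d * exp (- c * t) + f t * (exp (- c * t) * (- c)) - G^2)) (at t)"
        unfolding h_def by (auto intro!: derivative_eq_intros d)
      moreover have "d * exp (- c * t) + f t * (exp (- c * t) * (- c)) - G^2 \<le> 0"
      proof -
        have e1: "exp (- c * t) \<le> 1" using c0 t by simp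
        have "d * exp (- c * t) + f t * (exp (- c * t) * (- c)) = (d - c * f t) * exp (- c * t)" by (simp add: algebra_simps)
        also have "\<dots> \<le> G^2 * exp (- c * t)" using d(2) by (intro mult_right_mono) auto
        also have "\<dots> \<le> G^2" using e1 by (simp add: mult_left_le)
        finally show ?thesis by simp
      qed
      ultimately show "\<exists>y. (h has_real_derivative y) (at t) \<and> y \<le> 0" by blast
    qed
    then have "f x * exp (- c * x) \<le> G^2 * x" unfolding h_def using f0 by simp
    then have "f x * exp (- c * x) * exp (c * x) \<le> G^2 * x * exp (c * x)" by (intro mult_right_mono) auto
    moreover have "f x * exp (- c * x) * exp (c * x) = f x" by (simp add: mult.assoc mult_exp_exp)
    ultimately have "f x \<le> G^2 * x * exp (c * x)" by linarith
    then show ?thesis using True by simp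
  next
    case False
    define h where "h = (\<lambda>t. f t * exp (c * t) + G^2 * t)"
    have "h x \<le> h 0"
    proof (rule DERIV_nonneg_imp_nondecreasing[of x 0 h])
      show "x \<le> 0" using False by simp
      fix t assume t: "x \<le> t" "t \<le> 0"
      then have "\<bar>t\<bar> \<le> X" using x by simp
      then obtain d where d: "(f has_real_derivative d) (at t)" "\<bar>d\<bar> \<le> c * f t + G^2" using fd by blast
      have "(h has_real_derivative (d * exp (c * t) + f t * (exp (c * t) * c) + G^2)) (at t)"
        unfolding h_def by (auto intro!: derivative_eq_intros d)
      moreover have "d * exp (c * t) + f t * (exp (c * t) * c) + G^2 \<ge> 0"
      proof -
        have e1: "exp (c * t) \<le> 1" using c0 t by (simp add: mult_nonneg_nonpos)
        have "d * exp (c * t) + f t * (exp (c * t) * c) = (d + c * f t) * exp (c * t)" by (simp add: algebra_simps)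
        moreover have "(- (G^2)) * exp (c * t) \<le> (d + c * f t) * exp (c * t)" using d(2) by (intro mult_right_mono) auto
        ultimately have "d * exp (c * t) + f t * (exp (c * t) * c) \<ge> - (G^2) * exp (c * t)" by simp
        moreover have "G^2 * exp (c * t) \<le> G^2" using e1 by (simp add: mult_left_le)
        ultimately show ?thesis by simp
      qed
      ultimately show "\<exists>y. (h has_real_derivative y) (at t) \<and> y \<ge> 0" by blast
    qed
    then have "f x * exp (c * x) \<le> - (G^2) * x" unfolding h_def using f0 by simp
    then have "f x * exp (c * x) * exp (- c * x) \<le> - (G^2) * x * exp (- c * x)" by (intro mult_right_mono) auto
    moreover have "f x * exp (c * x) * exp (- c * x) = f x" by (simp add: mult.assoc mult_exp_exp)
    ultimately have "f x \<le> - (G^2) * x * exp (- c * x)" by linarith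
    then show ?thesis using False by simp
  qed
  then show ?thesis unfolding f_def c_def .
qed

lemma smooth_cont: "smooth_real V \<Longrightarrow> continuous_on UNIV V"
proof -
  assume "smooth_real V"
  then obtain D where D: "D 0 = V" "\<And>n x. (D n has_real_derivative D (Suc n) x) (at x)"
    unfolding smooth_real_def by blast
  show ?thesis using D by (metis DERIV_isCont continuous_at_imp_continuous_on)
qed

lemma sol_cont:
  assumes "schr_sol V z y y'"
  shows "continuous_on S y" "continuous_on S y'"
  using assms unfolding schr_sol_def
  by (auto intro!: continuous_at_imp_continuous_on has_vector_derivative_continuous)

lemma bound_on:
  fixes f :: "real \<Rightarrow> 'a::real_normed_vector"
  assumes "continuous_on UNIV f"
  obtains B where "B \<ge> 0" "\<And>t. \<bar>t\<bar> \<le> X \<Longrightarrow> norm (f t) \<le> B"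
proof -
  have "compact (f ` {-X..X})"
    by (rule compact_continuous_image) (use assms continuous_on_subset in auto)
  then have "bounded (f ` {-X..X})" by (rule compact_imp_bounded)
  then obtain b where b: "b > 0" "\<forall>y\<in>f ` {-X..X}. norm y \<le> b" unfolding bounded_pos by blast
  show ?thesis
  proof (rule that[of b])
    show "0 \<le> b" using b by simp
    fix t :: real assume "\<bar>t\<bar> \<le> X"
    then have "t \<in> {-X..X}" by auto
    then show "norm (f t) \<le> b" using b by auto
  qed
qed

lemma sol_lin:
  assumes "schr_sol V z y1 y1'" "schr_sol V z y2 y2'"
  shows "schr_sol V z (\<lambda>t. a * y1 t + b * y2 t) (\<lambda>t. a * y1' t + b * y2' t)"
  using assms unfolding schr_sol_def
  by (auto intro!: derivative_eq_intros simp: algebra_simps)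

lemma sol_uniq:
  assumes Vc: "continuous_on UNIV V" and sol: "schr_sol V z y y'" and y0: "y 0 = 0" "y' 0 = 0"
  shows "y x = 0 \<and> y' x = 0"
proof -
  have "continuous_on UNIV (\<lambda>t. complex_of_real (V t) - z)"
    using Vc by (intro continuous_intros) (auto intro: continuous_on_compose2[OF continuous_on_of_real])
  then obtain B where B: "B \<ge> 0" "\<And>t. \<bar>t\<bar> \<le> \<bar>x\<bar> \<Longrightarrow> norm (complex_of_real (V t) - z) \<le> B"
    using bound_on by blast
  have "norm (y x)^2 + norm (y' x)^2 \<le> 0^2 * \<bar>x\<bar> * exp ((B+2) * \<bar>x\<bar>)"
  proof (rule gronwall_est[where q = "\<lambda>t. complex_of_real (V t) - z" and g = "\<lambda>t. 0"])
    fix t :: real assume "\<bar>t\<bar> \<le> \<bar>x\<bar>"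
    show "(y has_vector_derivative y' t) (at t)" using sol unfolding schr_sol_def by blast
    show "(y' has_vector_derivative (complex_of_real (V t) - z) * y t + 0) (at t)"
      using sol unfolding schr_sol_def by simp
  qed (use B y0 in auto)
  then have "norm (y x)^2 + norm (y' x)^2 \<le> 0" by simp
  moreover have "norm (y x)^2 \<ge> 0" "norm (y' x)^2 \<ge> 0" by auto
  ultimately have "norm (y x)^2 = 0" "norm (y' x)^2 = 0" by linarith+
  then show ?thesis by simp
qed

lemma sol_real:
  assumes Vc: "continuous_on UNIV V" and sol: "schr_sol V z y y'" and z: "Im z = 0"
    and y0: "Im (y 0) = 0" "Im (y' 0) = 0"
  shows "Im (y x) = 0 \<and> Im (y' x) = 0"
proof -
  have zc: "cnj z = z" using z by (simp add: complex_eq_iff)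
  have sc: "schr_sol V z (\<lambda>t. cnj (y t)) (\<lambda>t. cnj (y' t))"
    using sol unfolding schr_sol_def
    by (auto intro!: derivative_eq_intros simp: zc)
  have "schr_sol V z (\<lambda>t. 1 * y t + (-1) * cnj (y t)) (\<lambda>t. 1 * y' t + (-1) * cnj (y' t))"
    by (rule sol_lin[OF sol sc])
  then have "(\<lambda>t. 1 * y t + (-1) * cnj (y t)) x = 0 \<and> (\<lambda>t. 1 * y' t + (-1) * cnj (y' t)) x = 0"
    by (rule sol_uniq[OF Vc]) (use y0 in \<open>auto simp: complex_eq_iff\<close>)
  then show ?thesis by (simp add: complex_eq_iff)
qed

lemma deriv_from_bound:
  fixes f :: "complex \<Rightarrow> complex"
  assumes b: "\<And>z. norm (z - z0) \<le> 1 \<Longrightarrow> norm (f z - f z0 - (z - z0) * D) \<le> norm (z - z0)^2 * K"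
  shows "(f has_field_derivative D) (at z0)"
  unfolding has_field_derivative_iff
proof (rule LIM_zero_cancel, rule Lim_null_comparison)
  show "\<forall>\<^sub>F z in at z0. norm ((f z - f z0) / (z - z0) - D) \<le> norm (z - z0) * K"
    unfolding eventually_at
  proof (intro exI[of _ 1] conjI ballI impI)
    fix z assume z: "z \<noteq> z0 \<and> dist z z0 < 1"
    then have nz: "z - z0 \<noteq> 0" by simp
    have "(f z - f z0) / (z - z0) - D = (f z - f z0 - (z - z0) * D) / (z - z0)"
      using nz by (simp add: field_simps)
    then have "norm ((f z - f z0) / (z - z0) - D) = norm (f z - f z0 - (z - z0) * D) / norm (z - z0)"
      by (simp add: norm_divide)
    also have "\<dots> \<le> norm (z - z0)^2 * K / norm (z - z0)"
      using b[of z] z nz by (intro divide_right_mono) (auto simp: dist_norm)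
    also have "\<dots> = norm (z - z0) * K" using nz by (simp add: power2_eq_square)
    finally show "norm ((f z - f z0) / (z - z0) - D) \<le> norm (z - z0) * K" .
  qed simp
  have "((\<lambda>z. norm (z - z0) * K) \<longlongrightarrow> norm (z0 - z0) * K) (at z0)"
    by (intro tendsto_intros)
  then show "((\<lambda>z. norm (z - z0) * K) \<longlongrightarrow> 0) (at z0)" by simp
qed

lemma z_deriv:
  fixes U U' :: "complex \<Rightarrow> real \<Rightarrow> complex" and \<psi> \<psi>' :: "real \<Rightarrow> complex"
  assumes Vc: "continuous_on UNIV V" and sol: "\<And>z. schr_sol V z (U z) (U' z)"
    and i0: "\<And>z. U z 0 = U z0 0" "\<And>z. U' z 0 = U' z0 0"
    and d\<psi>: "\<And>t. \<bar>t\<bar> \<le> X \<Longrightarrow> (\<psi> has_vector_derivative \<psi>' t) (at t)"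
    and d\<psi>': "\<And>t. \<bar>t\<bar> \<le> X \<Longrightarrow> (\<psi>' has_vector_derivative ((complex_of_real (V t) - z0) * \<psi> t - U z0 t)) (at t)"
    and \<psi>0: "\<psi> 0 = 0" "\<psi>' 0 = 0" and x: "\<bar>x\<bar> \<le> X"
  shows "((\<lambda>z. U z x) has_field_derivative \<psi> x) (at z0) \<and> ((\<lambda>z. U' z x) has_field_derivative \<psi>' x) (at z0)"
proof -
  have X0: "X \<ge> 0" using x by simp
  have "continuous_on UNIV (\<lambda>t. complex_of_real (V t) - z0)"
    using Vc by (intro continuous_intros) (auto intro: continuous_on_compose2[OF continuous_on_of_real])
  then obtain BV where BV: "BV \<ge> 0" "\<And>t. \<bar>t\<bar> \<le> X \<Longrightarrow> norm (complex_of_real (V t) - z0) \<le> BV"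
    using bound_on by blast
  obtain Bu where Bu: "Bu \<ge> 0" "\<And>t. \<bar>t\<bar> \<le> X \<Longrightarrow> norm (U z0 t) \<le> Bu"
    using bound_on sol_cont(1)[OF sol] by blast
  define L where "L = BV + 1"
  define Q where "Q = X * exp ((L+2) * X)"
  have Q0: "Q \<ge> 0" unfolding Q_def using X0 by simp
  have Qt: "\<bar>t\<bar> * exp ((L+2) * \<bar>t\<bar>) \<le> Q" if "\<bar>t\<bar> \<le> X" for t
    unfolding Q_def using that BV(1) L_def X0 by (intro mult_mono) auto
  define K1 where "K1 = Bu * sqrt Q"
  have K10: "K1 \<ge> 0" unfolding K1_def using Bu Q0 by simp
  have key: "norm (U z x - U z0 x - (z - z0) * \<psi> x) \<le> norm (z - z0)^2 * (K1 * sqrt Q) \<and>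
             norm (U' z x - U' z0 x - (z - z0) * \<psi>' x) \<le> norm (z - z0)^2 * (K1 * sqrt Q)"
    if z: "norm (z - z0) \<le> 1" for z
  proof -
    define dz where "dz = norm (z - z0)"
    have dz0: "dz \<ge> 0" unfolding dz_def by simp
    define e where "e = (\<lambda>t. U z t - U z0 t)"
    define p where "p = (\<lambda>t. U' z t - U' z0 t)"
    have qL: "norm (complex_of_real (V t) - z) \<le> L" if "\<bar>t\<bar> \<le> X" for t
    proof -
      have "norm (complex_of_real (V t) - z) \<le> norm (complex_of_real (V t) - z0) + norm (z0 - z)"
        using norm_triangle_ineq[of "complex_of_real (V t) - z0" "z0 - z"] by simp
      then have "norm (complex_of_real (V t) - z) \<le> norm (complex_of_real (V t) - z0) + norm (z - z0)"
        by (simp add: norm_minus_commute)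
      then show ?thesis using BV(2)[OF that] z unfolding L_def by linarith
    qed
    have ep: "norm (e t) \<le> dz * K1 \<and> norm (p t) \<le> dz * K1" if t: "\<bar>t\<bar> \<le> X" for t
    proof -
      have "norm (e t)^2 + norm (p t)^2 \<le> (dz * Bu)^2 * \<bar>t\<bar> * exp ((L+2) * \<bar>t\<bar>)"
      proof (rule gronwall_est[where q = "\<lambda>t. complex_of_real (V t) - z" and g = "\<lambda>t. - (z - z0) * U z0 t"])
        fix s :: real assume s: "\<bar>s\<bar> \<le> X"
        show "(e has_vector_derivative p s) (at s)"
          using sol[of z] sol[of z0] unfolding schr_sol_def e_def p_def by (auto intro!: derivative_eq_intros)
        show "(p has_vector_derivative (complex_of_real (V s) - z) * e s + - (z - z0) * U z0 s) (at s)"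
          using sol[of z] sol[of z0] unfolding schr_sol_def e_def p_def
          by (auto intro!: derivative_eq_intros simp: algebra_simps)
        show "norm (complex_of_real (V s) - z) \<le> L" using qL[OF s] .
        show "norm (- (z - z0) * U z0 s) \<le> dz * Bu"
          unfolding dz_def norm_mult norm_minus_cancel using Bu(2)[OF s] by (intro mult_left_mono) auto
      qed (use t BV(1) i0 in \<open>auto simp: L_def e_def p_def\<close>)
      also have "\<dots> \<le> (dz * Bu)^2 * Q" using Qt[OF t] by (simp add: mult.assoc mult_left_mono)
      finally have h: "norm (e t)^2 + norm (p t)^2 \<le> (dz * Bu)^2 * Q" .
      have sq: "sqrt ((dz * Bu)^2 * Q) = dz * K1" unfolding K1_def using dz0 Bu(1)
        by (simp add: real_sqrt_mult)
      have "norm (e t) \<le> sqrt ((dz * Bu)^2 * Q)" by (rule real_le_rsqrt) (use h in \<open>smt (verit) zero_le_power2\<close>)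
      moreover have "norm (p t) \<le> sqrt ((dz * Bu)^2 * Q)" by (rule real_le_rsqrt) (use h in \<open>smt (verit) zero_le_power2\<close>)
      ultimately show ?thesis unfolding sq by simp
    qed
    define D where "D = (\<lambda>t. e t - (z - z0) * \<psi> t)"
    define P where "P = (\<lambda>t. p t - (z - z0) * \<psi>' t)"
    have "norm (D x)^2 + norm (P x)^2 \<le> (dz * (dz * K1))^2 * \<bar>x\<bar> * exp ((L+2) * \<bar>x\<bar>)"
    proof (rule gronwall_est[where q = "\<lambda>t. complex_of_real (V t) - z0" and g = "\<lambda>t. - (z - z0) * e t"])
      fix s :: real assume s: "\<bar>s\<bar> \<le> X"
      show "(D has_vector_derivative P s) (at s)"
        using sol[of z] sol[of z0] d\<psi>[OF s] unfolding schr_sol_def e_def p_def D_def P_def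
        by (auto intro!: derivative_eq_intros)
      show "(P has_vector_derivative (complex_of_real (V s) - z0) * D s + - (z - z0) * e s) (at s)"
        using sol[of z] sol[of z0] d\<psi>'[OF s] unfolding schr_sol_def e_def p_def D_def P_def
        by (auto intro!: derivative_eq_intros simp: algebra_simps)
      show "norm (complex_of_real (V s) - z0) \<le> L" using BV(2)[OF s] unfolding L_def by simp
      show "norm (- (z - z0) * e s) \<le> dz * (dz * K1)"
        unfolding dz_def norm_mult norm_minus_cancel using ep[OF s] by (intro mult_left_mono) (auto simp: dz_def)
    qed (use x BV(1) i0 \<psi>0 in \<open>auto simp: L_def e_def p_def D_def P_def\<close>)
    also have "\<dots> \<le> (dz * (dz * K1))^2 * Q" using Qt[OF x] by (simp add: mult.assoc mult_left_mono)
    finally have h: "norm (D x)^2 + norm (P x)^2 \<le> (dz * (dz * K1))^2 * Q" .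
    have sq: "sqrt ((dz * (dz * K1))^2 * Q) = dz^2 * (K1 * sqrt Q)" using dz0 K10
      by (simp add: real_sqrt_mult power2_eq_square)
    have "norm (D x) \<le> sqrt ((dz * (dz * K1))^2 * Q)" by (rule real_le_rsqrt) (use h in \<open>smt (verit) zero_le_power2\<close>)
    moreover have "norm (P x) \<le> sqrt ((dz * (dz * K1))^2 * Q)" by (rule real_le_rsqrt) (use h in \<open>smt (verit) zero_le_power2\<close>)
    ultimately have "norm (D x) \<le> dz^2 * (K1 * sqrt Q) \<and> norm (P x) \<le> dz^2 * (K1 * sqrt Q)"
      using sq by simp
    then show ?thesis unfolding dz_def D_def P_def e_def p_def by simp
  qed
  show ?thesis
  proof
    show "((\<lambda>z. U z x) has_field_derivative \<psi> x) (at z0)"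
      by (rule deriv_from_bound) (use key in blast)
    show "((\<lambda>z. U' z x) has_field_derivative \<psi>' x) (at z0)"
      by (rule deriv_from_bound) (use key in blast)
  qed
qed




lemma wronsk_const:
  assumes "schr_sol V z y1 y1'" "schr_sol V z y2 y2'"
  shows "y1 t * y2' t - y1' t * y2 t = y1 0 * y2' 0 - y1' 0 * y2 0"
proof -
  have "(\<lambda>t. y1 t * y2' t - y1' t * y2 t) t = (\<lambda>t. y1 t * y2' t - y1' t * y2 t) 0"
  proof -
    obtain c where "\<And>x. x \<in> UNIV \<Longrightarrow> (\<lambda>t. y1 t * y2' t - y1' t * y2 t) x = c"
    proof (rule has_vector_derivative_zero_constant[of UNIV])
      fix x :: real
      show "((\<lambda>t. y1 t * y2' t - y1' t * y2 t) has_vector_derivative 0) (at x within UNIV)"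
        using assms unfolding schr_sol_def
        by (auto intro!: derivative_eq_intros simp: algebra_simps)
    qed auto
    then show ?thesis by simp
  qed
  then show ?thesis by simp
qed

lemma antideriv:
  fixes f :: "real \<Rightarrow> complex"
  assumes "continuous_on UNIV f" "\<bar>t\<bar> < R"
  shows "((\<lambda>t. integral {-R..t} f) has_vector_derivative f t) (at t)"
proof -
  have "((\<lambda>t. integral {-R..t} f) has_vector_derivative f t) (at t within {-R..R})"
    by (rule integral_has_vector_derivative) (use assms continuous_on_subset in auto)
  then have "((\<lambda>t. integral {-R..t} f) has_vector_derivative f t) (at t within {-R<..<R})"
    by (rule has_vector_derivative_within_subset) auto
  then show ?thesis using assms(2) by (subst (asm) has_vector_derivative_within_open) auto
qed

lemma psi_props:
  fixes u0 u0' \<phi> \<phi>' :: "real \<Rightarrow> complex"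
  assumes s1: "schr_sol V z u0 u0'" and s2: "schr_sol V z \<phi> \<phi>'"
    and W: "\<And>t. u0 t * \<phi>' t - u0' t * \<phi> t = 1"
    and a_def: "a = (\<lambda>t. integral {-R..t} (\<lambda>s. u0 s * \<phi> s) - integral {-R..0} (\<lambda>s. u0 s * \<phi> s))"
    and b_def: "b = (\<lambda>t. - (integral {-R..t} (\<lambda>s. u0 s ^ 2) - integral {-R..0} (\<lambda>s. u0 s ^ 2)))"
    and \<psi>_def: "\<psi> = (\<lambda>t. a t * u0 t + b t * \<phi> t)"
    and \<psi>'_def: "\<psi>' = (\<lambda>t. a t * u0' t + b t * \<phi>' t)"
    and t: "\<bar>t\<bar> < R"
  shows "(\<psi> has_vector_derivative \<psi>' t) (at t)"
    "(\<psi>' has_vector_derivative ((complex_of_real (V t) - z) * \<psi> t - u0 t)) (at t)"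
    "\<psi> 0 = 0" "\<psi>' 0 = 0"
proof -
  have c1: "continuous_on UNIV (\<lambda>s. u0 s * \<phi> s)" "continuous_on UNIV (\<lambda>s. u0 s ^ 2)"
    using sol_cont[OF s1] sol_cont[OF s2] by (auto intro!: continuous_intros)
  have da: "(a has_vector_derivative u0 t * \<phi> t) (at t)"
    unfolding a_def using antideriv[OF c1(1) t] by (auto intro!: derivative_eq_intros)
  have db: "(b has_vector_derivative - (u0 t ^ 2)) (at t)"
    unfolding b_def using antideriv[OF c1(2) t] by (auto intro!: derivative_eq_intros)
  have du: "(u0 has_vector_derivative u0' t) (at t)" "(u0' has_vector_derivative (complex_of_real (V t) - z) * u0 t) (at t)"
    "(\<phi> has_vector_derivative \<phi>' t) (at t)" "(\<phi>' has_vector_derivative (complex_of_real (V t) - z) * \<phi> t) (at t)"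
    using s1 s2 unfolding schr_sol_def by auto
  show "(\<psi> has_vector_derivative \<psi>' t) (at t)"
    unfolding \<psi>_def \<psi>'_def using da db du
    by (auto intro!: derivative_eq_intros simp: algebra_simps power2_eq_square)
  have "(\<psi>' has_vector_derivative (u0 t * \<phi> t * u0' t + a t * ((complex_of_real (V t) - z) * u0 t)
           + (- (u0 t ^ 2)) * \<phi>' t + b t * ((complex_of_real (V t) - z) * \<phi> t))) (at t)"
    unfolding \<psi>'_def using da db du
    by (auto intro!: derivative_eq_intros simp: algebra_simps)
  moreover have "u0 t * \<phi> t * u0' t + a t * ((complex_of_real (V t) - z) * u0 t)
           + (- (u0 t ^ 2)) * \<phi>' t + b t * ((complex_of_real (V t) - z) * \<phi> t)
        = (complex_of_real (V t) - z) * \<psi> t - u0 t * (u0 t * \<phi>' t - u0' t * \<phi> t)"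
    unfolding \<psi>_def by (simp add: algebra_simps power2_eq_square)
  ultimately show "(\<psi>' has_vector_derivative ((complex_of_real (V t) - z) * \<psi> t - u0 t)) (at t)"
    using W[of t] by simp
  show "\<psi> 0 = 0" "\<psi>' 0 = 0" unfolding \<psi>_def \<psi>'_def a_def b_def by auto
qed



lemma N_lower:
  fixes B P1 P2 T1 T2 :: complex
  assumes h: "m0 \<le> cmod B" "A0*E \<le> cmod P1" "A0*E \<le> cmod P2" "cmod P1 \<le> A1*E" "cmod P2 \<le> A1*E"
    "cmod T1 * E \<le> Q" "cmod T2 * E \<le> Q" "0 \<le> m0" "0 \<le> A0" "0 < E"
  shows "m0*A0^2*E^2 - 2*A1*Q \<le> cmod (B*P1*P2 + P1*T1 - T2*P2)"
proof -
  have A1: "A1 \<ge> 0" using h(2,4,9,10) by (smt (verit) mult_nonneg_nonneg zero_le_mult_iff)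
  have x: "m0*A0^2*E^2 \<le> cmod (B*P1*P2)"
  proof -
    have "m0 * (A0*E) * (A0*E) \<le> cmod B * cmod P1 * cmod P2"
      using h by (intro mult_mono) auto
    then show ?thesis by (simp add: norm_mult power2_eq_square mult_ac)
  qed
  have y: "cmod (P1*T1) \<le> A1*Q"
  proof -
    have "cmod P1 * cmod T1 \<le> A1*E * cmod T1" using h(4) by (intro mult_right_mono) auto
    also have "\<dots> = A1 * (cmod T1 * E)" by simp
    also have "\<dots> \<le> A1 * Q" using h(6) A1 by (intro mult_left_mono) auto
    finally show ?thesis by (simp add: norm_mult)
  qed
  have z: "cmod (T2*P2) \<le> A1*Q"
  proof -
    have "cmod P2 * cmod T2 \<le> A1*E * cmod T2" using h(5) by (intro mult_right_mono) auto
    also have "\<dots> = A1 * (cmod T2 * E)" by simp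
    also have "\<dots> \<le> A1 * Q" using h(7) A1 by (intro mult_left_mono) auto
    finally show ?thesis by (simp add: norm_mult mult.commute)
  qed
  have t1: "cmod (B*P1*P2) - cmod (T2*P2 - P1*T1) \<le> cmod (B*P1*P2 - (T2*P2 - P1*T1))"
    by (rule norm_triangle_ineq2)
  have t2: "cmod (T2*P2 - P1*T1) \<le> cmod (T2*P2) + cmod (P1*T1)" by (rule norm_triangle_ineq4)
  have t3: "B*P1*P2 - (T2*P2 - P1*T1) = B*P1*P2 + P1*T1 - T2*P2" by simp
  have "cmod (B*P1*P2) - cmod (P1*T1) - cmod (T2*P2) \<le> cmod (B*P1*P2 + P1*T1 - T2*P2)"
    using t1 t2 unfolding t3 by linarith
  then show ?thesis using x y z by linarith
qed

lemma final_real: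
  fixes \<alpha> \<beta> \<gamma> k M :: real
  assumes "\<alpha> > 0" "k > 0" "\<beta> \<ge> 0" "\<gamma> \<ge> 0" "M \<ge> 1" "M \<ge> 2*(\<beta>+\<gamma>+1)/(\<alpha>*k^2)"
  shows "exp (k*M) \<le> \<alpha> * exp (k*M)^2 - \<beta>*M - \<gamma>"
proof -
  have km: "0 \<le> k*M" using assms by simp
  have "1 + k*M + (k*M)^2/2 \<le> exp (k*M)" by (rule exp_lower_Taylor_quadratic[OF km])
  then have e: "(k*M)^2/2 \<le> exp (k*M)" using km by linarith
  have "2*(\<beta>+\<gamma>+1) \<le> M * (\<alpha>*k^2)" using assms(6) assms(1,2)
    by (simp add: divide_le_eq mult.commute)
  then have "2*(\<beta>+\<gamma>+1) * M \<le> M * (\<alpha>*k^2) * M" using assms(5) by (intro mult_right_mono) auto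
  moreover have "\<beta>*M + \<gamma> + 1 \<le> (\<beta>+\<gamma>+1) * M"
  proof -
    have "(\<gamma>+1)*(M-1) \<ge> 0" using assms by simp
    then show ?thesis by (simp add: algebra_simps)
  qed
  ultimately have "\<beta>*M + \<gamma> + 1 \<le> \<alpha> * ((k*M)^2/2)" by (simp add: power2_eq_square algebra_simps)
  also have "\<dots> \<le> \<alpha> * exp (k*M)" using e assms(1) by (intro mult_left_mono) auto
  finally have a: "\<beta>*M + \<gamma> + 1 \<le> \<alpha> * exp (k*M)" .
  have e1: "exp (k*M) \<ge> 1" using assms by simp
  have "exp (k*M) * (\<beta>*M + \<gamma> + 1) \<le> exp (k*M) * (\<alpha> * exp (k*M))"
    using a by (intro mult_left_mono) auto
  moreover have "\<beta>*M + \<gamma> \<le> exp (k*M) * (\<beta>*M + \<gamma>)"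
  proof -
    have "0 \<le> \<beta>*M + \<gamma>" using assms by simp
    from mult_right_mono[OF e1 this] show ?thesis by simp
  qed
  ultimately show ?thesis by (simp add: power2_eq_square algebra_simps)
qed


lemma theta_phi_lower:
  fixes ph ph' sE C0 e1 e2 :: real and a a' :: complex
  assumes W: "a * of_real ph' - a' * of_real ph = 1" and b: "cmod a \<le> C0*e2" "cmod a' \<le> C0*e2"
    and e: "e2 * e1 = 1" and pos: "sE > 0" "C0 > 0" "e2 > 0"
  shows "min 1 sE / 2 / C0 * e1 \<le> cmod (of_real ph' - \<i> * of_real sE * of_real ph)"
proof -
  define T where "T = cmod (of_real ph' - \<i> * of_real sE * of_real ph)"
  have "1 = cmod (a * of_real ph' - a' * of_real ph)" using W by simp
  also have "\<dots> \<le> cmod a * \<bar>ph'\<bar> + cmod a' * \<bar>ph\<bar>"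
    using norm_triangle_ineq4[of "a * of_real ph'" "a' * of_real ph"] by (simp add: norm_mult)
  also have "\<dots> \<le> C0*e2 * \<bar>ph'\<bar> + C0*e2 * \<bar>ph\<bar>"
    using b by (intro add_mono mult_right_mono) auto
  finally have "1 \<le> C0*e2*(\<bar>ph\<bar> + \<bar>ph'\<bar>)" by (simp add: algebra_simps)
  moreover have "e1 > 0"
  proof -
    have "e1 = 1 / e2" using e pos by (simp add: field_simps mult.commute)
    then show ?thesis using pos by simp
  qed
  ultimately have "e1 * 1 \<le> e1 * (C0*e2*(\<bar>ph\<bar> + \<bar>ph'\<bar>))"
    by (intro mult_left_mono) auto
  also have "\<dots> = C0 * (\<bar>ph\<bar> + \<bar>ph'\<bar>) * (e2 * e1)" by (simp add: mult_ac)
  also have "\<dots> = C0 * (\<bar>ph\<bar> + \<bar>ph'\<bar>)" using e by simp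
  finally have h1: "e1 / C0 \<le> \<bar>ph\<bar> + \<bar>ph'\<bar>" using pos by (simp add: divide_le_eq mult.commute)
  have r: "\<bar>ph'\<bar> \<le> T" unfolding T_def
    using abs_Re_le_cmod[of "of_real ph' - \<i> * of_real sE * of_real ph"] by simp
  have i: "sE * \<bar>ph\<bar> \<le> T" unfolding T_def
    using abs_Im_le_cmod[of "of_real ph' - \<i> * of_real sE * of_real ph"] pos by (simp add: abs_mult)
  define m where "m = min 1 sE"
  have m: "m > 0" "m \<le> 1" "m \<le> sE" using pos unfolding m_def by auto
  have "m * \<bar>ph'\<bar> \<le> T" using r m by (smt (verit) mult_left_le_one_le abs_ge_zero)
  moreover have "m * \<bar>ph\<bar> \<le> T" using i m by (smt (verit) mult_right_mono abs_ge_zero)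
  ultimately have "m * (\<bar>ph\<bar> + \<bar>ph'\<bar>) / 2 \<le> T" by (simp add: algebra_simps)
  moreover have "m * (e1 / C0) / 2 \<le> m * (\<bar>ph\<bar> + \<bar>ph'\<bar>) / 2"
    using mult_left_mono[OF h1, of m] m by (intro divide_right_mono) auto
  ultimately have "m * (e1 / C0) / 2 \<le> T" by linarith
  then show ?thesis unfolding m_def T_def by (simp add: field_simps)
qed



theorem lemma3p1:
  fixes V Vper Vdef :: "real \<Rightarrow> real" and \<rho> E :: real
    and \<Phi> \<Phi>' :: "real \<Rightarrow> real"
    and u u' :: "complex \<Rightarrow> complex \<Rightarrow> real \<Rightarrow> complex"
    and v v' :: "real \<Rightarrow> complex"
    and w\<eta> :: complex and C0 k :: real
  assumes V_smooth: "smooth_real V"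
    and V_dec: "\<And>x. V x = Vper x + Vdef x"
    and Vper_per: "\<And>x. Vper (x + 1) = Vper x"
    and rho: "\<rho> \<ge> 0"
    and Vdef_supp: "\<And>x. \<bar>x\<bar> > \<rho> \<Longrightarrow> Vdef x = 0"
    and E_pos: "E > 0"
    and Phi_d1: "\<And>x. (\<Phi> has_real_derivative \<Phi>' x) (at x)"
    and Phi_d2: "\<And>x. (\<Phi>' has_real_derivative ((V x - E) * \<Phi> x)) (at x)"
    and Phi_L2: "(\<lambda>x. (\<Phi> x)\<^sup>2) integrable_on UNIV"
    and Phi_nz: "\<exists>x. \<Phi> x \<noteq> 0"
    and Phi_norm: "\<Phi> 0 \<noteq> 0 \<longrightarrow> \<Phi> 0 = 1" "\<Phi> 0 = 0 \<longrightarrow> \<Phi>' 0 = 1"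
    and w\<eta>_def: "w\<eta> = (if \<Phi> 0 \<noteq> 0 then complex_of_real (\<Phi>' 0) else 0)"
    and u_sol: "\<And>w z. schr_sol V z (u w z) (u' w z)"
    and u_init: "\<And>w z. u w z 0 = (if \<Phi> 0 \<noteq> 0 then 1 else - w)"
                "\<And>w z. u' w z 0 = (if \<Phi> 0 \<noteq> 0 then w else 1)"
    and v_sol: "schr_sol V (complex_of_real E) v v'"
    and v_init: "v 0 = (if \<Phi> 0 \<noteq> 0 then - w\<eta> / (1 + w\<eta>\<^sup>2) else - 1 / (1 + w\<eta>\<^sup>2))"
                "v' 0 = (if \<Phi> 0 \<noteq> 0 then 1 / (1 + w\<eta>\<^sup>2) else - w\<eta> / (1 + w\<eta>\<^sup>2))"
    and C0_pos: "C0 > 0" and k_pos: "k > 0"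
    and u_bd: "\<And>x. norm (u w\<eta> (complex_of_real E) x) \<le> C0 * exp (- k * \<bar>x\<bar>)"
              "\<And>x. norm (u' w\<eta> (complex_of_real E) x) \<le> C0 * exp (- k * \<bar>x\<bar>)"
    and v_bd: "\<And>x. norm (v x) \<le> C0 * exp (k * \<bar>x\<bar>)"
              "\<And>x. norm (v' x) \<le> C0 * exp (k * \<bar>x\<bar>)"
  shows "\<exists>C > 0. \<exists>M0 > \<rho>. \<forall>M \<ge> M0.
           norm (Ncal (Theta u u' M) (Theta u u' (- M)) w\<eta> (complex_of_real E)) \<ge> C * exp (k * M)"
proof -
  have Vc: "continuous_on UNIV V" by (rule smooth_cont[OF V_smooth])
  define z0 where "z0 = complex_of_real E"
  define P0 where "P0 = (\<Phi> 0 \<noteq> 0)"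
  define u0 where "u0 = u w\<eta> z0"
  define u0' where "u0' = u' w\<eta> z0"
  define \<phi> where "\<phi> = (\<lambda>t. u (w\<eta> + 1) z0 t - u0 t)"
  define \<phi>' where "\<phi>' = (\<lambda>t. u' (w\<eta> + 1) z0 t - u0' t)"
  have s0: "schr_sol V z0 u0 u0'" unfolding u0_def u0'_def by (rule u_sol)
  have s\<phi>: "schr_sol V z0 \<phi> \<phi>'"
    using sol_lin[OF u_sol[where w="w\<eta>+1" and z=z0] s0, of 1 "-1"] unfolding \<phi>_def \<phi>'_def by simp
  have wr: "Im w\<eta> = 0" unfolding w\<eta>_def by simp
  have i_u0: "u0 0 = (if P0 then 1 else - w\<eta>)" "u0' 0 = (if P0 then w\<eta> else 1)"
    unfolding u0_def u0'_def P0_def by (simp_all add: u_init)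
  have i_\<phi>: "\<phi> 0 = (if P0 then 0 else -1)" "\<phi>' 0 = (if P0 then 1 else 0)"
    unfolding \<phi>_def \<phi>'_def u0_def u0'_def P0_def by (simp_all add: u_init)
  have w0: "\<not> P0 \<Longrightarrow> w\<eta> = 0" unfolding w\<eta>_def P0_def by simp
  have W0: "u0 0 * \<phi>' 0 - u0' 0 * \<phi> 0 = 1" using i_u0 i_\<phi> by (cases P0) auto
  have W: "\<And>t. u0 t * \<phi>' t - u0' t * \<phi> t = 1" using wronsk_const[OF s0 s\<phi>] W0 by simp
  have z0r: "Im z0 = 0" unfolding z0_def by simp
  have u0r: "\<And>t. Im (u0 t) = 0 \<and> Im (u0' t) = 0"
    by (rule sol_real[OF Vc s0 z0r]) (use i_u0 wr in auto)
  have \<phi>r: "\<And>t. Im (\<phi> t) = 0 \<and> Im (\<phi>' t) = 0"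
    by (rule sol_real[OF Vc s\<phi> z0r]) (use i_\<phi> in auto)
  have aff: "u w z0 t = u0 t + (w - w\<eta>) * \<phi> t \<and> u' w z0 t = u0' t + (w - w\<eta>) * \<phi>' t" for w t
  proof -
    have "schr_sol V z0 (\<lambda>t. u w z0 t - (u0 t + (w - w\<eta>) * \<phi> t)) (\<lambda>t. u' w z0 t - (u0' t + (w - w\<eta>) * \<phi>' t))"
      using u_sol[where w=w and z=z0] s0 s\<phi> unfolding schr_sol_def by (auto intro!: derivative_eq_intros simp: algebra_simps)
    then have "(\<lambda>t. u w z0 t - (u0 t + (w - w\<eta>) * \<phi> t)) t = 0 \<and> (\<lambda>t. u' w z0 t - (u0' t + (w - w\<eta>) * \<phi>' t)) t = 0"
      by (rule sol_uniq[OF Vc]) (use i_u0 i_\<phi> u_init(1)[where w=w and z=z0] u_init(2)[where w=w and z=z0] w0 in \<open>auto simp: P0_def split: if_splits\<close>)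
    then show ?thesis by simp
  qed
  have ub: "\<And>t. cmod (u0 t) \<le> C0 * exp (- k * \<bar>t\<bar>)" "\<And>t. cmod (u0' t) \<le> C0 * exp (- k * \<bar>t\<bar>)"
    using u_bd unfolding u0_def u0'_def z0_def by auto
  define c where "c = (if P0 then w\<eta> / (1 + w\<eta>^2) else 0)"
  have nz: "1 + w\<eta>^2 \<noteq> 0"
  proof -
    have "w\<eta> = complex_of_real (Re w\<eta>)" using wr by (simp add: complex_eq_iff)
    then have "1 + w\<eta>^2 = complex_of_real (1 + (Re w\<eta>)^2)" by (metis of_real_1 of_real_add of_real_power)
    moreover have "1 + (Re w\<eta>)^2 \<noteq> 0" by (smt (verit) zero_le_power2)
    ultimately show ?thesis by (metis of_real_eq_0_iff)
  qed
  have \<phi>v: "\<phi> t = v t + c * u0 t \<and> \<phi>' t = v' t + c * u0' t" for t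
  proof -
    have "schr_sol V z0 (\<lambda>t. \<phi> t - (v t + c * u0 t)) (\<lambda>t. \<phi>' t - (v' t + c * u0' t))"
      using v_sol s0 s\<phi> unfolding schr_sol_def z0_def by (auto intro!: derivative_eq_intros simp: algebra_simps)
    moreover have "\<phi> 0 - (v 0 + c * u0 0) = 0" "\<phi>' 0 - (v' 0 + c * u0' 0) = 0"
      using nz w0 i_u0 i_\<phi> v_init unfolding c_def P0_def by (auto simp: field_simps power2_eq_square)
    ultimately have "(\<lambda>t. \<phi> t - (v t + c * u0 t)) t = 0 \<and> (\<lambda>t. \<phi>' t - (v' t + c * u0' t)) t = 0"
      by (intro sol_uniq[OF Vc]) auto
    then show ?thesis by simp
  qed
  define C\<phi> where "C\<phi> = (1 + cmod c) * C0"
  have C\<phi>0: "C\<phi> > 0" unfolding C\<phi>_def using C0_pos by (simp add: add_pos_nonneg)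
  have \<phi>b: "cmod (\<phi> t) \<le> C\<phi> * exp (k * \<bar>t\<bar>) \<and> cmod (\<phi>' t) \<le> C\<phi> * exp (k * \<bar>t\<bar>)" for t
  proof -
    have ee: "exp (- k * \<bar>t\<bar>) \<le> exp (k * \<bar>t\<bar>)" using k_pos by simp
    have ee2: "C0 * exp (- k * \<bar>t\<bar>) \<le> C0 * exp (k * \<bar>t\<bar>)" using ee C0_pos by (intro mult_left_mono) auto
    have ue: "cmod (u0 t) \<le> C0 * exp (k * \<bar>t\<bar>)" "cmod (u0' t) \<le> C0 * exp (k * \<bar>t\<bar>)"
      using ub(1)[of t] ub(2)[of t] ee2 by linarith+
    have "cmod (v t + c * u0 t) \<le> cmod (v t) + cmod c * cmod (u0 t)" by (metis norm_mult norm_triangle_ineq)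
    also have "\<dots> \<le> C0 * exp (k * \<bar>t\<bar>) + cmod c * (C0 * exp (k * \<bar>t\<bar>))"
      using v_bd(1)[of t] ue(1) by (intro add_mono mult_left_mono) auto
    also have "\<dots> = C\<phi> * exp (k * \<bar>t\<bar>)" unfolding C\<phi>_def by (simp add: algebra_simps)
    finally have 1: "cmod (\<phi> t) \<le> C\<phi> * exp (k * \<bar>t\<bar>)" using \<phi>v by simp
    have "cmod (v' t + c * u0' t) \<le> cmod (v' t) + cmod c * cmod (u0' t)" by (metis norm_mult norm_triangle_ineq)
    also have "\<dots> \<le> C0 * exp (k * \<bar>t\<bar>) + cmod c * (C0 * exp (k * \<bar>t\<bar>))"
      using v_bd(2)[of t] ue(2) by (intro add_mono mult_left_mono) auto
    also have "\<dots> = C\<phi> * exp (k * \<bar>t\<bar>)" unfolding C\<phi>_def by (simp add: algebra_simps)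
    finally have 2: "cmod (\<phi>' t) \<le> C\<phi> * exp (k * \<bar>t\<bar>)" using \<phi>v by simp
    show ?thesis using 1 2 by simp
  qed
  have "\<exists>x0. u0 x0 \<noteq> 0"
  proof (rule ccontr)
    assume "\<not> (\<exists>x0. u0 x0 \<noteq> 0)"
    then have u00: "u0 = (\<lambda>_. 0)" by auto
    have "(u0 has_vector_derivative u0' 0) (at 0)" using s0 unfolding schr_sol_def by blast
    then have "((\<lambda>_. 0::complex) has_vector_derivative u0' 0) (at 0)" using u00 by simp
    moreover have "((\<lambda>_. 0::complex) has_vector_derivative 0) (at 0)" by (rule has_vector_derivative_const)
    ultimately have "u0' 0 = 0" by (rule vector_derivative_unique_at)
    then show False using W0 u00 by simp
  qed
  then obtain x0 where x0: "u0 x0 \<noteq> 0" by blast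
  define r where "r = (\<lambda>t. Re (u0 t))"
  have u0_of: "u0 t = complex_of_real (r t)" for t using u0r[of t] unfolding r_def by (simp add: complex_eq_iff)
  have rx0: "r x0 \<noteq> 0" using x0 u0_of by auto
  have rc: "continuous_on UNIV r" unfolding r_def using sol_cont(1)[OF s0] by (intro continuous_intros)
  define T where "T = \<bar>x0\<bar> + 1"
  define m0 where "m0 = integral {-T..T} (\<lambda>t. r t ^ 2)"
  have rc2: "continuous_on S (\<lambda>t. r t ^ 2)" for S
    using rc continuous_on_subset by (blast intro: continuous_intros)
  have rint: "(\<lambda>t. r t ^ 2) integrable_on {a..b}" for a b
    by (rule integrable_continuous_interval) (rule rc2)
  have m0pos: "m0 > 0"
  proof -
    have "m0 \<ge> 0" unfolding m0_def by (rule integral_nonneg) (use rint in auto)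
    moreover have "m0 \<noteq> 0"
    proof
      assume "m0 = 0"
      then have "((\<lambda>t. r t ^ 2) has_integral 0) (cbox (-T) T)"
        using integrable_integral[OF rint[of "-T" T]] unfolding m0_def by (simp add: cbox_interval)
      then have "(\<lambda>t. r t ^ 2) x0 = 0"
        by (intro has_integral_0_cbox_imp_0[of "-T" T "\<lambda>t. r t ^ 2" x0]) (auto simp: rc2 T_def)
      then show False using rx0 by simp
    qed
    ultimately show ?thesis by simp
  qed
  have sE: "sqrt E > 0" using E_pos by simp
  have cs: "csqrt z0 = complex_of_real (sqrt E)" unfolding z0_def using E_pos by (simp add: csqrt_of_real)
  define s where "s = \<i> * inverse (2 * csqrt z0)"
  define A0 where "A0 = min 1 (sqrt E) / 2 / C0"
  define A1 where "A1 = (1 + sqrt E) * C\<phi>"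
  define A2 where "A2 = (1 + sqrt E) * C0"
  define A3 where "A3 = C0 * C\<phi>"
  define \<alpha> where "\<alpha> = m0 * A0^2"
  define \<beta> where "\<beta> = 2*A1*A3*A2"
  define \<gamma> where "\<gamma> = 2*A1*cmod s*C0"
  define M0 where "M0 = max (\<rho>+1) (max T (max 1 (2*(\<beta>+\<gamma>+1)/(\<alpha>*k^2))))"
  have A0pos: "A0 > 0" unfolding A0_def using sE C0_pos by simp
  have \<alpha>pos: "\<alpha> > 0" unfolding \<alpha>_def using m0pos A0pos by simp
  have Apos: "A1 \<ge> 0" "A2 \<ge> 0" "A3 \<ge> 0" using C0_pos C\<phi>0 sE by (auto simp: A1_def A2_def A3_def)
  have \<beta>\<gamma>: "\<beta> \<ge> 0" "\<gamma> \<ge> 0" unfolding \<beta>_def \<gamma>_def using Apos C0_pos by auto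
  define \<Theta>u where "\<Theta>u = (\<lambda>x. u0' x - \<i> * csqrt z0 * u0 x)"
  define \<Theta>\<phi> where "\<Theta>\<phi> = (\<lambda>x. \<phi>' x - \<i> * csqrt z0 * \<phi> x)"
  have dTw: "deriv (\<lambda>w. Theta u u' x w z0) w\<eta> = \<Theta>\<phi> x" for x
  proof -
    have "(\<lambda>w. Theta u u' x w z0) = (\<lambda>w. (u0' x + (w - w\<eta>) * \<phi>' x) - \<i> * csqrt z0 * (u0 x + (w - w\<eta>) * \<phi> x))"
      unfolding Theta_def using aff by auto
    moreover have "((\<lambda>w. (u0' x + (w - w\<eta>) * \<phi>' x) - \<i> * csqrt z0 * (u0 x + (w - w\<eta>) * \<phi> x)) has_field_derivative \<Theta>\<phi> x) (at w\<eta>)"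
      unfolding \<Theta>\<phi>_def by (auto intro!: derivative_eq_intros)
    ultimately show ?thesis by (simp add: DERIV_imp_deriv)
  qed
  have z0nr: "z0 \<notin> \<real>\<^sub>\<le>\<^sub>0" unfolding z0_def using E_pos by (simp add: complex_nonpos_Reals_iff)
  have dc: "(csqrt has_field_derivative inverse (2 * csqrt z0)) (at z0)" by (rule has_field_derivative_csqrt[OF z0nr])
  show ?thesis
  proof (rule exI[where x=1], rule conjI)
    show "(1::real) > 0" by simp
  next
  show "\<exists>M0>\<rho>. \<forall>M\<ge>M0. 1 * exp (k * M) \<le> norm (Ncal (Theta u u' M) (Theta u u' (- M)) w\<eta> (complex_of_real E))"
  proof (rule exI[where x=M0], intro conjI allI impI)
    show "M0 > \<rho>" unfolding M0_def by simp
    fix M assume M: "M \<ge> M0"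
    have M1: "M \<ge> 1" "M \<ge> T" "M \<ge> 2*(\<beta>+\<gamma>+1)/(\<alpha>*k^2)" using M unfolding M0_def by auto
    define R where "R = M + 1"
    define a where "a = (\<lambda>t. integral {-R..t} (\<lambda>s. u0 s * \<phi> s) - integral {-R..0} (\<lambda>s. u0 s * \<phi> s))"
    define b where "b = (\<lambda>t. - (integral {-R..t} (\<lambda>s. u0 s ^ 2) - integral {-R..0} (\<lambda>s. u0 s ^ 2)))"
    define \<psi> where "\<psi> = (\<lambda>t. a t * u0 t + b t * \<phi> t)"
    define \<psi>' where "\<psi>' = (\<lambda>t. a t * u0' t + b t * \<phi>' t)"
    note pp = psi_props[OF s0 s\<phi> W a_def b_def \<psi>_def \<psi>'_def]
    have R0: "\<bar>0::real\<bar> < R" unfolding R_def using M1 by simp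
    have zd: "((\<lambda>z. u w\<eta> z x) has_field_derivative \<psi> x) (at z0) \<and> ((\<lambda>z. u' w\<eta> z x) has_field_derivative \<psi>' x) (at z0)"
      if "\<bar>x\<bar> \<le> M" for x
    proof (rule z_deriv[where U = "u w\<eta>" and U' = "u' w\<eta>" and X = M])
      show "continuous_on UNIV V" by (rule Vc)
      show "schr_sol V z (u w\<eta> z) (u' w\<eta> z)" for z by (rule u_sol)
      show "u w\<eta> z 0 = u w\<eta> z0 0" "u' w\<eta> z 0 = u' w\<eta> z0 0" for z by (simp_all add: u_init)
      show "(\<psi> has_vector_derivative \<psi>' t) (at t)" if t: "\<bar>t\<bar> \<le> M" for t
        by (rule pp(1)) (use t in \<open>simp add: R_def\<close>)
      show "(\<psi>' has_vector_derivative (complex_of_real (V t) - z0) * \<psi> t - u w\<eta> z0 t) (at t)" if t: "\<bar>t\<bar> \<le> M" for t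
        using pp(2)[of t] t unfolding u0_def R_def by simp
      show "\<psi> 0 = 0" "\<psi>' 0 = 0" using pp(3,4)[OF R0] by auto
      show "\<bar>x\<bar> \<le> M" by (rule that)
    qed
    have dTz: "deriv (\<lambda>z. Theta u u' x w\<eta> z) z0 = a x * \<Theta>u x + b x * \<Theta>\<phi> x - s * u0 x" if "\<bar>x\<bar> \<le> M" for x
    proof -
      have h1: "((\<lambda>z. u w\<eta> z x) has_field_derivative \<psi> x) (at z0)" "((\<lambda>z. u' w\<eta> z x) has_field_derivative \<psi>' x) (at z0)"
        using zd[OF that] by auto
      have fe: "(\<lambda>z. Theta u u' x w\<eta> z) = (\<lambda>z. u' w\<eta> z x - \<i> * (csqrt z * u w\<eta> z x))"
        unfolding Theta_def by (simp add: mult.assoc)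
      have "((\<lambda>z. u' w\<eta> z x - \<i> * (csqrt z * u w\<eta> z x)) has_field_derivative
              (\<psi>' x - \<i> * (inverse (2 * csqrt z0) * u w\<eta> z0 x + csqrt z0 * \<psi> x))) (at z0)"
      proof -
        have m: "((\<lambda>z. csqrt z * u w\<eta> z x) has_field_derivative
              (inverse (2 * csqrt z0) * u w\<eta> z0 x + csqrt z0 * \<psi> x)) (at z0)"
          using DERIV_mult[OF dc h1(1)] by (simp add: mult.commute)
        show ?thesis by (intro DERIV_diff DERIV_cmult h1(2) m)
      qed
      then have "deriv (\<lambda>z. Theta u u' x w\<eta> z) z0 = \<psi>' x - \<i> * (inverse (2 * csqrt z0) * u w\<eta> z0 x + csqrt z0 * \<psi> x)"
        unfolding fe by (rule DERIV_imp_deriv)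
      also have "\<dots> = a x * \<Theta>u x + b x * \<Theta>\<phi> x - s * u0 x"
        unfolding \<psi>_def \<psi>'_def \<Theta>u_def \<Theta>\<phi>_def s_def u0_def by (simp add: algebra_simps)
      finally show ?thesis .
    qed
    define e where "e = exp (k * M)"
    define e2 where "e2 = exp (- k * M)"
    have ee: "e2 * e = 1" unfolding e_def e2_def by (simp add: mult_exp_exp)
    have epos: "e > 0" "e2 > 0" unfolding e_def e2_def by auto
    have M0': "M \<ge> 0" using M1 by simp
    have ncs: "cmod (csqrt z0) = sqrt E" unfolding cs using sE by simp
    have nz0: "cmod z0 = E" unfolding z0_def using E_pos by simp
    have est: "A0 * e \<le> cmod (\<Theta>\<phi> x) \<and> cmod (\<Theta>\<phi> x) \<le> A1 * e \<and> cmod (\<Theta>u x) \<le> A2 * e2 \<and> cmod (u0 x) \<le> C0 * e2"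
      if x: "\<bar>x\<bar> = M" for x
    proof (intro conjI)
      have of1: "\<phi> x = complex_of_real (Re (\<phi> x))" "\<phi>' x = complex_of_real (Re (\<phi>' x))"
        using \<phi>r[of x] by (auto simp: complex_eq_iff)
      have b1: "cmod (u0 x) \<le> C0 * e2" "cmod (u0' x) \<le> C0 * e2" using ub[of x] x unfolding e2_def by auto
      then show "cmod (u0 x) \<le> C0 * e2" by simp
      have "u0 x * complex_of_real (Re (\<phi>' x)) - u0' x * complex_of_real (Re (\<phi> x)) = 1"
        using W[of x] of1 by simp
      from theta_phi_lower[OF this b1 ee sE C0_pos epos(2)]
      show "A0 * e \<le> cmod (\<Theta>\<phi> x)" unfolding A0_def \<Theta>\<phi>_def cs using of1 by simp
      have "cmod (\<Theta>\<phi> x) \<le> cmod (\<phi>' x) + sqrt E * cmod (\<phi> x)"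
        unfolding \<Theta>\<phi>_def using norm_triangle_ineq4[of "\<phi>' x" "\<i> * csqrt z0 * \<phi> x"] by (simp add: norm_mult nz0)
      also have "\<dots> \<le> C\<phi> * e + sqrt E * (C\<phi> * e)"
        using \<phi>b[of x] x E_pos unfolding e_def by (intro add_mono mult_left_mono) auto
      also have "\<dots> = A1 * e" unfolding A1_def by (simp add: algebra_simps)
      finally show "cmod (\<Theta>\<phi> x) \<le> A1 * e" .
      have "cmod (\<Theta>u x) \<le> cmod (u0' x) + sqrt E * cmod (u0 x)"
        unfolding \<Theta>u_def using norm_triangle_ineq4[of "u0' x" "\<i> * csqrt z0 * u0 x"] by (simp add: norm_mult nz0)
      also have "\<dots> \<le> C0 * e2 + sqrt E * (C0 * e2)"
        using b1 E_pos by (intro add_mono mult_left_mono) auto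
      also have "\<dots> = A2 * e2" unfolding A2_def by (simp add: algebra_simps)
      finally show "cmod (\<Theta>u x) \<le> A2 * e2" .
    qed
    have f1c: "continuous_on S (\<lambda>s. u0 s * \<phi> s)" for S
      using sol_cont[OF s0] sol_cont[OF s\<phi>] by (auto intro!: continuous_intros)
    have f1i: "(\<lambda>s. u0 s * \<phi> s) integrable_on {c..d}" for c d
      by (rule integrable_continuous_interval) (rule f1c)
    have f1b: "norm (u0 t * \<phi> t) \<le> A3" for t
    proof -
      have "norm (u0 t * \<phi> t) \<le> (C0 * exp (- k * \<bar>t\<bar>)) * (C\<phi> * exp (k * \<bar>t\<bar>))"
        unfolding norm_mult using ub(1)[of t] \<phi>b[of t] C0_pos by (intro mult_mono) auto
      also have "\<dots> = A3 * (exp (- k * \<bar>t\<bar>) * exp (k * \<bar>t\<bar>))" unfolding A3_def by (simp add: mult_ac)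
      also have "\<dots> = A3" by (simp add: mult_exp_exp)
      finally show ?thesis .
    qed
    have aM: "a M = integral {0..M} (\<lambda>s. u0 s * \<phi> s)"
      using Henstock_Kurzweil_Integration.integral_combine[where a="-R" and c=0 and b=M, OF _ _ f1i] M0' unfolding a_def R_def by (simp add: algebra_simps)
    have amM: "a (-M) = - integral {-M..0} (\<lambda>s. u0 s * \<phi> s)"
      using Henstock_Kurzweil_Integration.integral_combine[where a="-R" and c="-M" and b=0, OF _ _ f1i] M0' unfolding a_def R_def by (simp add: algebra_simps)
    have abd: "cmod (a x) \<le> A3 * M" if "\<bar>x\<bar> = M" for x
    proof (cases "x = M")
      case True
      have "norm (integral {0..M} (\<lambda>s. u0 s * \<phi> s)) \<le> A3 * (M - 0)"
        by (rule integral_bound) (use M0' f1c f1b in auto)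
      then show ?thesis using True aM by simp
    next
      case False
      then have xm: "x = -M" using that by auto
      have "norm (integral {-M..0} (\<lambda>s. u0 s * \<phi> s)) \<le> A3 * (0 - (-M))"
        by (rule integral_bound) (use M0' f1c f1b in auto)
      then show ?thesis using xm amM by simp
    qed
    define B where "B = b (-M) - b M"
    have u2: "(\<lambda>s. u0 s ^ 2) = (\<lambda>s. complex_of_real (r s ^ 2))" using u0_of by auto
    have f2i: "(\<lambda>s. u0 s ^ 2) integrable_on {c..d}" for c d
      unfolding u2 by (rule integrable_continuous_interval, rule continuous_on_of_real, rule rc2)
    have "B = integral {-M..M} (\<lambda>s. u0 s ^ 2)"
      using Henstock_Kurzweil_Integration.integral_combine[where a="-R" and c="-M" and b=M, OF _ _ f2i] M0' unfolding B_def b_def R_def by (simp add: algebra_simps)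
    also have "\<dots> = complex_of_real (integral {-M..M} (\<lambda>s. r s ^ 2))"
      unfolding u2 by (rule integral_unique[OF has_integral_of_real[OF integrable_integral[OF rint]]])
    finally have Beq: "B = complex_of_real (integral {-M..M} (\<lambda>s. r s ^ 2))" .
    have "m0 \<le> integral {-M..M} (\<lambda>s. r s ^ 2)"
      unfolding m0_def by (rule integral_subset_le) (use M1(2) rint in auto)
    then have Bb: "m0 \<le> cmod B" unfolding Beq by simp
    define Q where "Q = A3 * M * A2 + cmod s * C0"
    define T1 where "T1 = a (-M) * \<Theta>u (-M) - s * u0 (-M)"
    define T2 where "T2 = a M * \<Theta>u M - s * u0 M"
    have Tb: "cmod (a x * \<Theta>u x - s * u0 x) * e \<le> Q" if "\<bar>x\<bar> = M" for x
    proof -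
      have "cmod (a x * \<Theta>u x - s * u0 x) \<le> cmod (a x) * cmod (\<Theta>u x) + cmod s * cmod (u0 x)"
        using norm_triangle_ineq4[of "a x * \<Theta>u x" "s * u0 x"] by (simp add: norm_mult)
      also have "\<dots> \<le> (A3 * M) * (A2 * e2) + cmod s * (C0 * e2)"
        using est[OF that] abd[OF that] Apos M0' by (intro add_mono mult_mono mult_left_mono) auto
      also have "\<dots> = Q * e2" unfolding Q_def by (simp add: algebra_simps)
      finally have "cmod (a x * \<Theta>u x - s * u0 x) * e \<le> Q * e2 * e" using epos by (intro mult_right_mono) auto
      also have "\<dots> = Q" using ee by (simp add: mult.assoc)
      finally show ?thesis .
    qed
    have Neq: "Ncal (Theta u u' M) (Theta u u' (- M)) w\<eta> (complex_of_real E) = B * \<Theta>\<phi> M * \<Theta>\<phi> (-M) + \<Theta>\<phi> M * T1 - T2 * \<Theta>\<phi> (-M)"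
    proof -
      have "Ncal (Theta u u' M) (Theta u u' (- M)) w\<eta> z0 =
          \<Theta>\<phi> M * (a (-M) * \<Theta>u (-M) + b (-M) * \<Theta>\<phi> (-M) - s * u0 (-M))
          - (a M * \<Theta>u M + b M * \<Theta>\<phi> M - s * u0 M) * \<Theta>\<phi> (-M)"
        unfolding Ncal_def dTw using dTz[of M] dTz[of "-M"] M0' by simp
      also have "\<dots> = B * \<Theta>\<phi> M * \<Theta>\<phi> (-M) + \<Theta>\<phi> M * T1 - T2 * \<Theta>\<phi> (-M)"
        unfolding B_def T1_def T2_def by (simp add: algebra_simps)
      finally show ?thesis unfolding z0_def .
    qed
    have "m0*A0^2*e^2 - 2*A1*Q \<le> cmod (B * \<Theta>\<phi> M * \<Theta>\<phi> (-M) + \<Theta>\<phi> M * T1 - T2 * \<Theta>\<phi> (-M))"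
      by (rule N_lower) (use Bb est[of M] est[of "-M"] Tb[of M] Tb[of "-M"] M0' m0pos A0pos epos in \<open>auto simp: T1_def T2_def\<close>)
    moreover have "e \<le> \<alpha> * e^2 - \<beta>*M - \<gamma>"
      unfolding e_def by (rule final_real[OF \<alpha>pos k_pos \<beta>\<gamma> M1(1) M1(3)])
    moreover have "\<alpha> * e^2 - \<beta>*M - \<gamma> = m0*A0^2*e^2 - 2*A1*Q"
      unfolding \<alpha>_def \<beta>_def \<gamma>_def Q_def by (simp add: algebra_simps)
    ultimately show "1 * exp (k * M) \<le> norm (Ncal (Theta u u' M) (Theta u u' (- M)) w\<eta> (complex_of_real E))"
      unfolding Neq e_def by simp
  qed
  qed
qed

end
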